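(* Let $\mathcal L^{(\alpha_H)}_n$ and $\mathcal L_n$ be the sum-level sets of the alternating and the classical Lüroth maps, as in the context. Then, as $n\to\infty$: (1) $\displaystyle\sum_{k=1}^n\lambda(\mathcal L_k)=\sum_{k=1}^n\lambda(\mathcal L^{(\alpha_H)}_k)\sim n\Big(\sum_{k=1}^n\frac1k\Big)^{-1}\sim\frac{n}{\log n}$; (2) $\displaystyle\lambda(\mathcal L_n)=\lambda(\mathcal L^{(\alpha_H)}_n)\sim\Big(\sum_{k=1}^n\frac1k\Big)^{-1}\sim\frac1{\log n}$.
   Context: $\lambda$ is Lebesgue measure on $\mathcal U=[0,1]$. The harmonic partition $\alpha_H=\{A_n\}$ has $A_n=(1/(n+1),1/n]$. The alternating Lüroth map is $L_{\alpha_H}(x)=-n(n+1)x+(n+1)$ for $x\in A_n$, $L_{\alpha_H}(0)=0$; its cylinders are $C(\ell_1,\dots,\ell_k)=\{x:L_{\alpha_H}^{i-1}(x)\in A_{\ell_i},\ i=1,\dots,k\}$ and $\mathcal L^{(\alpha_H)}_n$ is the union of all $C(\ell_1,\dots,\ell_k)$, $k\in\mathbb N$, with $\sum_i\ell_i=n$. The classical Lüroth map is $L(x)=n(n+1)x-n$ for $x\in[1/(n+1),1/n)$, $n\ge2$, $L(x)=2x-1$ for $x\in[1/2,1]$, $L(0)=0$; with digit intervals $B_1=[1/2,1]$, $B_n=[1/(n+1),1/n)$ for $n\ge2$, its cylinders are $\{x:L^{i-1}(x)\in B_{\ell_i},\ i=1,\dots,k\}$ and $\mathcal L_n$ is the union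 of those cylinders with $\sum_i\ell_i=n$. $a_n\sim b_n$ means $a_n/b_n\to1$. *)

theory Defs
  imports "HOL-Analysis.Analysis" "HOL-Library.Landau_Symbols"
begin

definition harmA :: "nat \<Rightarrow> real set" where
  "harmA n = {1 / real (n + 1) <.. 1 / real n}"

definition alt_digit :: "real \<Rightarrow> nat" where
  "alt_digit x = (THE n. n \<ge> 1 \<and> x \<in> harmA n)"

definition alt_luroth :: "real \<Rightarrow> real" where
  "alt_luroth x = (if x = 0 then 0 else
     - real (alt_digit x) * real (alt_digit x + 1) * x + real (alt_digit x + 1))"

definition lurB :: "nat \<Rightarrow> real set" where
  "lurB n = (if n = 1 then {1/2 .. 1} else {1 / real (n + 1) ..< 1 / real n})"

definition lur_digit :: "real \<Rightarrow> nat" where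
  "lur_digit x = (THE n. n \<ge> 1 \<and> x \<in> lurB n)"

definition luroth :: "real \<Rightarrow> real" where
  "luroth x = (if x = 0 then 0 else
     real (lur_digit x) * real (lur_digit x + 1) * x - real (lur_digit x))"

definition cyl :: "(real \<Rightarrow> real) \<Rightarrow> (nat \<Rightarrow> real set) \<Rightarrow> nat list \<Rightarrow> real set" where
  "cyl T D ls = {x \<in> {0..1}. \<forall>i < length ls. (T ^^ i) x \<in> D (ls ! i)}"

definition sum_level :: "(real \<Rightarrow> real) \<Rightarrow> (nat \<Rightarrow> real set) \<Rightarrow> nat \<Rightarrow> real set" where
  "sum_level T D n =
     (\<Union> ls \<in> {ls. ls \<noteq> [] \<and> (\<forall>l \<in> set ls. l \<ge> 1) \<and> sum_list ls = n}. cyl T D ls)"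

abbreviation alt_level :: "nat \<Rightarrow> real set" where
  "alt_level n \<equiv> sum_level alt_luroth harmA n"

abbreviation lur_level :: "nat \<Rightarrow> real set" where
  "lur_level n \<equiv> sum_level luroth lurB n"

end

theory Submission imports Defs "HOL-Real_Asymp.Real_Asymp" begin
lemma aff_emeasure:
  fixes A :: "real set" assumes A: "A \<in> sets borel" and c: "c \<noteq> 0"
  shows "emeasure lborel A = ennreal \<bar>c\<bar> * emeasure lborel {x. t + c*x \<in> A}"
proof -
  have "emeasure lborel A = emeasure (density (distr lborel borel (\<lambda>x. t + c * x)) (\<lambda>_. ennreal (abs c))) A"
    using lborel_real_affine[OF c, of t] by simp
  also have "\<dots> = ennreal \<bar>c\<bar> * emeasure lborel {x. t + c*x \<in> A}"
    using A by (simp add: emeasure_density nn_integral_cmult_indicator emeasure_distr vimage_def)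
  finally show ?thesis .
qed

lemma aff_measure:
  fixes A :: "real set" assumes A: "A \<in> sets borel" and c: "c \<noteq> 0"
  shows "measure lborel {x. t + c*x \<in> A} = measure lborel A / \<bar>c\<bar>"
proof -
  have "measure lborel A = \<bar>c\<bar> * measure lborel {x. t + c*x \<in> A}"
    unfolding measure_def using aff_emeasure[OF A c, of t]
    by (simp add: enn2real_mult)
  thus ?thesis using c by simp
qed

lemma cyl_Nil: "cyl T D [] = {0..1}" by (auto simp: cyl_def)

lemma cyl_Cons:
  assumes maps: "\<And>x. x \<in> D l \<Longrightarrow> x \<in> {0..1} \<Longrightarrow> T x \<in> {0..1}"
  shows "cyl T D (l#ls) = {x\<in>{0..1}. x \<in> D l \<and> T x \<in> cyl T D ls}"
proof (intro set_eqI iffI)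
  fix x assume x: "x \<in> cyl T D (l#ls)"
  hence x01: "x \<in> {0..1}" and all: "\<forall>i < Suc (length ls). (T ^^ i) x \<in> D ((l#ls) ! i)"
    by (auto simp: cyl_def)
  have xl: "x \<in> D l" using all[rule_format, of 0] by simp
  have "\<forall>i < length ls. (T ^^ i) (T x) \<in> D (ls ! i)"
  proof (intro allI impI)
    fix i assume "i < length ls"
    hence "(T ^^ Suc i) x \<in> D ((l#ls) ! Suc i)" using all by blast
    thus "(T ^^ i) (T x) \<in> D (ls ! i)" by (simp add: funpow_swap1)
  qed
  thus "x \<in> {x\<in>{0..1}. x \<in> D l \<and> T x \<in> cyl T D ls}"
    using x01 xl maps[OF xl x01] by (simp add: cyl_def)
next
  fix x assume "x \<in> {x\<in>{0..1}. x \<in> D l \<and> T x \<in> cyl T D ls}"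
  hence x01: "x \<in> {0..1}" and xl: "x \<in> D l" and r: "\<forall>i < length ls. (T ^^ i) (T x) \<in> D (ls ! i)"
    by (auto simp: cyl_def)
  have "\<forall>i < Suc (length ls). (T ^^ i) x \<in> D ((l#ls) ! i)"
  proof (intro allI impI)
    fix i assume i: "i < Suc (length ls)"
    show "(T ^^ i) x \<in> D ((l#ls) ! i)"
    proof (cases i)
      case 0 thus ?thesis using xl by simp
    next
      case (Suc k) thus ?thesis using r i by (simp add: funpow_swap1)
    qed
  qed
  thus "x \<in> cyl T D (l#ls)" using x01 by (simp add: cyl_def)
qed

definition lev :: "(real \<Rightarrow> real) \<Rightarrow> (nat \<Rightarrow> real set) \<Rightarrow> nat \<Rightarrow> real set" where
  "lev T D n = (if n = 0 then {0..1} else sum_level T D n)"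

lemma level_rec:
  assumes maps: "\<And>l x. l \<ge> 1 \<Longrightarrow> x \<in> D l \<Longrightarrow> x \<in> {0..1} \<Longrightarrow> T x \<in> {0..1}"
    and n: "n \<ge> 1"
  shows "sum_level T D n = (\<Union>l\<in>{1..n}. {x\<in>{0..1}. x \<in> D l \<and> T x \<in> lev T D (n - l)})"
proof (intro set_eqI iffI)
  fix x assume "x \<in> sum_level T D n"
  then obtain ls where ls: "ls \<noteq> []" "\<forall>l\<in>set ls. l \<ge> 1" "sum_list ls = n" and x: "x \<in> cyl T D ls"
    by (auto simp: sum_level_def)
  then obtain l rest where lr: "ls = l # rest" by (cases ls) auto
  have l1: "l \<ge> 1" using ls lr by auto
  have xc: "x \<in> {0..1}" "x \<in> D l" "T x \<in> cyl T D rest"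
    using x cyl_Cons[of D l T rest] maps[OF l1] lr by auto
  have ln: "l \<le> n" using ls lr by auto
  have "T x \<in> lev T D (n - l)"
  proof (cases "rest = []")
    case True thus ?thesis using xc ls lr by (simp add: lev_def cyl_Nil)
  next
    case False
    then obtain r rs where "rest = r # rs" by (cases rest) auto
    hence "sum_list rest \<ge> 1" using ls lr by auto
    moreover have "n - l = sum_list rest" using ls lr by auto
    moreover have "T x \<in> sum_level T D (n - l)"
      unfolding sum_level_def using xc False ls lr \<open>n - l = sum_list rest\<close>
      by (intro UN_I[of rest]) auto
    ultimately show ?thesis unfolding lev_def by (metis not_one_le_zero)
  qed
  thus "x \<in> (\<Union>l\<in>{1..n}. {x\<in>{0..1}. x \<in> D l \<and> T x \<in> lev T D (n - l)})"
    using xc l1 ln by auto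
next
  fix x assume "x \<in> (\<Union>l\<in>{1..n}. {x\<in>{0..1}. x \<in> D l \<and> T x \<in> lev T D (n - l)})"
  then obtain l where l: "l \<in> {1..n}" and xc: "x \<in> {0..1}" "x \<in> D l" "T x \<in> lev T D (n - l)"
    by auto
  show "x \<in> sum_level T D n"
  proof (cases "n - l = 0")
    case True
    hence "l = n" using l by auto
    moreover have "x \<in> cyl T D [l]" using cyl_Cons[of D l T "[]"] maps l xc by (auto simp: cyl_Nil)
    ultimately show ?thesis using l unfolding sum_level_def by (intro UN_I[of "[l]"]) auto
  next
    case False
    then obtain rest where r: "rest \<noteq> []" "\<forall>l\<in>set rest. l \<ge> 1" "sum_list rest = n - l" "T x \<in> cyl T D rest"
      using xc by (auto simp: lev_def sum_level_def)
    have "x \<in> cyl T D (l # rest)" using cyl_Cons[of D l T rest] maps l xc r by auto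
    thus ?thesis using l r unfolding sum_level_def by (intro UN_I[of "l # rest"]) auto
  qed
qed

lemma fin_emeasure_01:
  assumes "S \<subseteq> {0..1::real}" shows "emeasure lborel S \<noteq> \<infinity>"
proof -
  have "emeasure lborel S \<le> emeasure lborel {0..1::real}" using assms by (intro emeasure_mono) auto
  thus ?thesis by (auto simp: top_unique)
qed

lemma piece_measure:
  fixes a b :: real and j :: nat
  assumes j: "j \<ge> 1" and A: "A \<in> sets borel" "A \<subseteq> {0..1}"
    and Dm: "D j \<in> sets borel" and Dsub: "D j \<subseteq> {1/real (j+1)..1/real j}"
    and Dco: "{1/real (j+1)..1/real j} - D j \<subseteq> {1/real (j+1), 1/real j}"
    and a: "\<bar>a\<bar> = real j * real (j+1)" and Taff: "\<forall>x\<in>D j. T x = b + a*x"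
    and pre: "\<forall>x. b + a*x \<in> {0..1} \<longrightarrow> x \<in> {1/real (j+1)..1/real j}"
  shows "{x\<in>{0..1}. x \<in> D j \<and> T x \<in> A} \<in> sets borel \<and>
         measure lborel {x\<in>{0..1}. x \<in> D j \<and> T x \<in> A} = measure lborel A / (real j * real (j+1))"
proof -
  define P where "P = {x\<in>{0..1}. x \<in> D j \<and> T x \<in> A}"
  define Q where "Q = {x. b + a*x \<in> A}"
  have a0: "a \<noteq> 0" using a j by auto
  have I01: "{1/real (j+1)..1/real j} \<subseteq> {0..1::real}" using j by (auto simp: field_simps)
  have Qm: "Q \<in> sets borel" unfolding Q_def
    using A(1) by measurable
  have D01: "D j \<subseteq> {0..1}" using Dsub I01 by blast
  have PQ: "P = D j \<inter> Q" unfolding P_def Q_def using D01 Taff by auto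
  have Pm: "P \<in> sets borel" using PQ Qm Dm by auto
  have QI: "Q \<subseteq> {1/real (j+1)..1/real j}" using pre A(2) unfolding Q_def by auto
  have "Q - P \<subseteq> {1/real (j+1), 1/real j}" using QI Dco PQ by auto
  hence null: "Q - P \<in> null_sets lborel"
    using Qm Pm by (intro null_sets_subset[OF finite_imp_null_set_lborel[of "{1/real (j+1), 1/real j}"]]) auto
  have "Q = P \<union> (Q - P)" using PQ by auto
  hence "measure lborel Q = measure lborel P"
    using measure_Un_null_set[of P lborel "Q - P"] Pm null by simp
  moreover have "measure lborel Q = measure lborel A / \<bar>a\<bar>"
    unfolding Q_def by (rule aff_measure[OF A(1) a0])
  ultimately show ?thesis using Pm a unfolding P_def by simp
qed

definition good :: "(real \<Rightarrow> real) \<Rightarrow> (nat \<Rightarrow> real set) \<Rightarrow> bool" where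
  "good T D \<longleftrightarrow> (\<forall>j\<ge>1. D j \<in> sets borel \<and> D j \<subseteq> {1/real (j+1)..1/real j}
      \<and> {1/real (j+1)..1/real j} - D j \<subseteq> {1/real (j+1), 1/real j}
      \<and> (\<forall>i\<ge>1. i \<noteq> j \<longrightarrow> D i \<inter> D j = {})
      \<and> (\<exists>a b. \<bar>a\<bar> = real j * real (j+1) \<and> (\<forall>x\<in>D j. T x = b + a*x)
            \<and> (\<forall>x. b + a*x \<in> {0..1} \<longrightarrow> x \<in> {1/real (j+1)..1/real j}))
      \<and> (\<forall>x\<in>D j. x \<in> {0..1} \<longrightarrow> T x \<in> {0..1}))"

lemma good_D:
  assumes g: "good T D" and j: "j \<ge> 1"
  shows "D j \<in> sets borel \<and> D j \<subseteq> {1/real (j+1)..1/real j}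
      \<and> {1/real (j+1)..1/real j} - D j \<subseteq> {1/real (j+1), 1/real j}
      \<and> (\<forall>i\<ge>1. i \<noteq> j \<longrightarrow> D i \<inter> D j = {})
      \<and> (\<exists>a b. \<bar>a\<bar> = real j * real (j+1) \<and> (\<forall>x\<in>D j. T x = b + a*x)
            \<and> (\<forall>x. b + a*x \<in> {0..1} \<longrightarrow> x \<in> {1/real (j+1)..1/real j}))
      \<and> (\<forall>x\<in>D j. x \<in> {0..1} \<longrightarrow> T x \<in> {0..1})"
  using good_def[THEN iffD1, OF g, rule_format, OF j] .

lemma good_piece:
  assumes g: "good T D" and j: "j \<ge> 1" and A: "A \<in> sets borel" "A \<subseteq> {0..1}"
  shows "{x\<in>{0..1}. x \<in> D j \<and> T x \<in> A} \<in> sets borel \<and>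
         measure lborel {x\<in>{0..1}. x \<in> D j \<and> T x \<in> A} = measure lborel A / (real j * real (j+1))"
proof -
  note G = good_D[OF g j]
  from G obtain a b where ab: "\<bar>a\<bar> = real j * real (j+1)" "\<forall>x\<in>D j. T x = b + a*x"
    "\<forall>x. b + a*x \<in> {0..1} \<longrightarrow> x \<in> {1/real (j+1)..1/real j}"
    by (elim conjE exE) 
  from G have Dm: "D j \<in> sets borel" and Dsub: "D j \<subseteq> {1/real (j+1)..1/real j}"
    and Dco: "{1/real (j+1)..1/real j} - D j \<subseteq> {1/real (j+1), 1/real j}"
    by blast+
  show ?thesis by (rule piece_measure[where D=D and T=T and a=a and b=b, OF j A Dm Dsub Dco ab])
qed

lemma good_disj: assumes "good T D" "i \<ge> 1" "j \<ge> 1" "i \<noteq> j" shows "D i \<inter> D j = {}"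
proof -
  from good_D[OF assms(1,3)] have "\<forall>i\<ge>1. i \<noteq> j \<longrightarrow> D i \<inter> D j = {}" by blast
  thus ?thesis using assms by blast
qed

lemma good_maps: assumes "good T D" "l \<ge> 1" "x \<in> D l" "x \<in> {0..1}" shows "T x \<in> {0..1}"
proof -
  from good_D[OF assms(1,2)] have "\<forall>x\<in>D l. x \<in> {0..1} \<longrightarrow> T x \<in> {0..1}" by blast
  thus ?thesis using assms by blast
qed

lemma lev_meas:
  assumes g: "good T D"
  shows "lev T D n \<in> sets borel \<and> lev T D n \<subseteq> {0..1}"
proof (induction n rule: less_induct)
  case (less n)
  show ?case
  proof (cases "n = 0")
    case True thus ?thesis by (simp add: lev_def)
  next
    case False
    hence n1: "n \<ge> 1" by simp
    have "sum_level T D n = (\<Union>l\<in>{1..n}. {x\<in>{0..1}. x \<in> D l \<and> T x \<in> lev T D (n - l)})"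
      by (rule level_rec[OF good_maps[OF g] n1])
    hence eq: "lev T D n = (\<Union>l\<in>{1..n}. {x\<in>{0..1}. x \<in> D l \<and> T x \<in> lev T D (n - l)})"
      using False by (simp only: lev_def if_False)
    have "\<forall>l\<in>{1..n}. {x\<in>{0..1}. x \<in> D l \<and> T x \<in> lev T D (n - l)} \<in> sets borel"
    proof
      fix l assume l: "l \<in> {1..n}"
      hence "n - l < n" by auto
      hence "lev T D (n-l) \<in> sets borel" "lev T D (n-l) \<subseteq> {0..1}" using less by auto
      thus "{x\<in>{0..1}. x \<in> D l \<and> T x \<in> lev T D (n - l)} \<in> sets borel"
        using good_piece[OF g _ , of l "lev T D (n-l)"] l by simp
    qed
    hence "lev T D n \<in> sets borel" unfolding eq by (intro sets.finite_UN) auto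
    thus ?thesis using eq by auto
  qed
qed

lemma lev_rec:
  assumes g: "good T D" and n1: "n \<ge> 1"
  shows "measure lborel (lev T D n) = (\<Sum>l=1..n. measure lborel (lev T D (n - l)) / (real l * real (l+1)))"
proof -
  define F where "F l = {x\<in>{0..1}. x \<in> D l \<and> T x \<in> lev T D (n - l)}" for l
  have "sum_level T D n = (\<Union>l\<in>{1..n}. F l)"
    unfolding F_def by (rule level_rec[OF good_maps[OF g] n1])
  hence eq: "lev T D n = (\<Union>l\<in>{1..n}. F l)"
    using n1 by (simp add: lev_def)
  have Fp: "F l \<in> sets borel \<and> measure lborel (F l) = measure lborel (lev T D (n - l)) / (real l * real (l+1))"
    if "l \<in> {1..n}" for l
    unfolding F_def using good_piece[OF g, of l "lev T D (n-l)"] lev_meas[OF g, of "n-l"] that by simp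
  have disj: "disjoint_family_on F {1..n}"
    unfolding disjoint_family_on_def
  proof (intro ballI impI)
    fix i k assume "i \<in> {1..n}" "k \<in> {1..n}" "i \<noteq> k"
    hence "D i \<inter> D k = {}" using good_disj[OF g, of i k] by auto
    thus "F i \<inter> F k = {}" unfolding F_def by blast
  qed
  have "measure lborel (lev T D n) = (\<Sum>l\<in>{1..n}. measure lborel (F l))"
    unfolding eq
  proof (rule measure_finite_Union)
    show "finite {1..n}" by simp
    show "F ` {1..n} \<subseteq> sets lborel" using Fp by (simp add: image_subset_iff)
    show "disjoint_family_on F {1..n}" by (rule disj)
    fix l assume "l \<in> {1..n}"
    show "emeasure lborel (F l) \<noteq> \<infinity>" by (rule fin_emeasure_01) (unfold F_def, blast)
  qed
  also have "\<dots> = (\<Sum>l=1..n. measure lborel (lev T D (n - l)) / (real l * real (l+1)))"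
    using Fp by (intro sum.cong) auto
  finally show ?thesis .
qed

lemma inv_mono_nat: "1 \<le> m \<Longrightarrow> m \<le> n \<Longrightarrow> 1 / real n \<le> 1 / real m"
  by (simp add: frac_le)

lemma harmA_disj: assumes "i \<ge> 1" "j \<ge> 1" "i \<noteq> j" shows "harmA i \<inter> harmA j = {}"
proof -
  have *: "harmA i \<inter> harmA j = {}" if "i < j" "i \<ge> 1" for i j
  proof -
    have "1 / real j \<le> 1 / real (i+1)" using that by (intro inv_mono_nat) auto
    thus ?thesis by (auto simp: harmA_def)
  qed
  show ?thesis using assms *[of i j] *[of j i] by (cases "i < j") auto
qed

lemma lurB_disj: assumes "i \<ge> 1" "j \<ge> 1" "i \<noteq> j" shows "lurB i \<inter> lurB j = {}"
proof -
  have *: "lurB i \<inter> lurB j = {}" if "i < j" "i \<ge> 1" for i j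
  proof -
    have "1 / real j \<le> 1 / real (i+1)" using that by (intro inv_mono_nat) auto
    moreover have "j \<noteq> 1" using that by auto
    ultimately show ?thesis by (auto simp: lurB_def)
  qed
  show ?thesis using assms *[of i j] *[of j i] by (cases "i < j") auto
qed

lemma alt_digit_eq: assumes "j \<ge> 1" "x \<in> harmA j" shows "alt_digit x = j"
  unfolding alt_digit_def
proof (rule the_equality)
  show "1 \<le> j \<and> x \<in> harmA j" using assms by auto
  fix n assume "1 \<le> n \<and> x \<in> harmA n"
  thus "n = j" using harmA_disj[of n j] assms by blast
qed

lemma lur_digit_eq: assumes "j \<ge> 1" "x \<in> lurB j" shows "lur_digit x = j"
  unfolding lur_digit_def
proof (rule the_equality)
  show "1 \<le> j \<and> x \<in> lurB j" using assms by auto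
  fix n assume "1 \<le> n \<and> x \<in> lurB n"
  thus "n = j" using lurB_disj[of n j] assms by blast
qed

lemma ub_iff: "real j > 0 \<Longrightarrow> (x \<le> 1/real j) \<longleftrightarrow> (real j * real (j+1) * x \<le> real j + 1)"
proof -
  assume jp: "real j > 0"
  have "(x \<le> 1/real j) \<longleftrightarrow> real j * x \<le> 1" using jp by (simp add: field_simps)
  also have "\<dots> \<longleftrightarrow> real (j+1) * (real j * x) \<le> real (j+1) * 1" by simp
  finally show ?thesis by (simp add: algebra_simps)
qed
lemma lb_iff: "real j > 0 \<Longrightarrow> (1/real (j+1) \<le> x) \<longleftrightarrow> (real j \<le> real j * real (j+1) * x)"
proof -
  assume jp: "real j > 0"
  have "(1/real (j+1) \<le> x) \<longleftrightarrow> 1 \<le> real (j+1) * x" by (simp add: field_simps)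
  also have "\<dots> \<longleftrightarrow> real j * 1 \<le> real j * (real (j+1) * x)" using jp by simp
  finally show ?thesis by (simp add: algebra_simps)
qed
lemma lb_iff': "real j > 0 \<Longrightarrow> (1/real (j+1) < x) \<longleftrightarrow> (real j < real j * real (j+1) * x)"
proof -
  assume jp: "real j > 0"
  have "(1/real (j+1) < x) \<longleftrightarrow> 1 < real (j+1) * x" by (simp add: field_simps)
  also have "\<dots> \<longleftrightarrow> real j * 1 < real j * (real (j+1) * x)" using jp by simp
  finally show ?thesis by (simp add: algebra_simps)
qed

lemma good_alt: "good alt_luroth harmA"
  unfolding good_def
proof (rule allI, rule impI, intro conjI)
  fix j :: nat assume j: "j \<ge> 1"
  have jp: "real j > 0" using j by auto
  show "harmA j \<in> sets borel" by (simp add: harmA_def)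
  show "harmA j \<subseteq> {1/real (j+1)..1/real j}" by (auto simp: harmA_def)
  show "{1/real (j+1)..1/real j} - harmA j \<subseteq> {1/real (j+1), 1/real j}" by (auto simp: harmA_def)
  show "\<forall>i\<ge>1. i \<noteq> j \<longrightarrow> harmA i \<inter> harmA j = {}" using harmA_disj j by blast
  have T: "alt_luroth x = real (j+1) + (- (real j * real (j+1))) * x" if "x \<in> harmA j" for x
  proof -
    have "x > 0" using that by (auto simp: harmA_def intro: le_less_trans[rotated])
    thus ?thesis using alt_digit_eq[OF j that] by (simp add: alt_luroth_def)
  qed
  show "\<exists>a b. \<bar>a\<bar> = real j * real (j+1) \<and> (\<forall>x\<in>harmA j. alt_luroth x = b + a*x)
            \<and> (\<forall>x. b + a*x \<in> {0..1} \<longrightarrow> x \<in> {1/real (j+1)..1/real j})"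
  proof (intro exI conjI allI impI ballI)
    show "\<bar>- (real j * real (j+1))\<bar> = real j * real (j+1)" by simp
    fix x
    show "x \<in> harmA j \<Longrightarrow> alt_luroth x = real (j+1) + (- (real j * real (j+1))) * x" by (rule T)
    assume "real (j+1) + (- (real j * real (j+1))) * x \<in> {0..1}"
    hence h: "0 \<le> real (j+1) + (- (real j * real (j+1))) * x" "real (j+1) + (- (real j * real (j+1))) * x \<le> 1"
      by (simp_all only: atLeastAtMost_iff)
    have r: "real (j+1) = real j + 1" by simp
    have a: "real j * real (j+1) * x \<le> real j + 1" "real j * real (j+1) * x \<ge> real j"
      using h unfolding r by (simp_all add: algebra_simps)
    have "x \<le> 1 / real j" using a(1) jp ub_iff by blast
    moreover have "1 / real (j+1) \<le> x" using a(2) jp lb_iff by blast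
    ultimately show "x \<in> {1/real (j+1)..1/real j}" by simp
  qed
  show "\<forall>x\<in>harmA j. x \<in> {0..1} \<longrightarrow> alt_luroth x \<in> {0..1}"
  proof (intro ballI impI)
    fix x assume x: "x \<in> harmA j"
    hence a: "1 / real (j+1) < x" "x \<le> 1 / real j" by (auto simp: harmA_def)
    have "real j * real (j+1) * x \<le> real j + 1" using a(2) jp ub_iff by blast
    moreover have "real j * real (j+1) * x > real j" using a(1) jp lb_iff' by blast
    ultimately show "alt_luroth x \<in> {0..1}" using T[OF x] by (simp add: algebra_simps)
  qed
qed

lemma good_lur: "good luroth lurB"
  unfolding good_def
proof (rule allI, rule impI, intro conjI)
  fix j :: nat assume j: "j \<ge> 1"
  have jp: "real j > 0" using j by auto
  show "lurB j \<in> sets borel" by (simp add: lurB_def)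
  show "lurB j \<subseteq> {1/real (j+1)..1/real j}" by (auto simp: lurB_def)
  show "{1/real (j+1)..1/real j} - lurB j \<subseteq> {1/real (j+1), 1/real j}" by (auto simp: lurB_def)
  show "\<forall>i\<ge>1. i \<noteq> j \<longrightarrow> lurB i \<inter> lurB j = {}" using lurB_disj j by blast
  have lb: "x \<ge> 1 / real (j+1)" "x \<le> 1 / real j" if "x \<in> lurB j" for x
    using that by (auto simp: lurB_def split: if_splits)
  have T: "luroth x = - real j + (real j * real (j+1)) * x" if "x \<in> lurB j" for x
  proof -
    have "x > 0" using lb(1)[OF that] by (auto intro: less_le_trans[rotated])
    thus ?thesis using lur_digit_eq[OF j that] by (simp add: luroth_def)
  qed
  show "\<exists>a b. \<bar>a\<bar> = real j * real (j+1) \<and> (\<forall>x\<in>lurB j. luroth x = b + a*x)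
            \<and> (\<forall>x. b + a*x \<in> {0..1} \<longrightarrow> x \<in> {1/real (j+1)..1/real j})"
  proof (intro exI conjI allI impI ballI)
    show "\<bar>real j * real (j+1)\<bar> = real j * real (j+1)" by simp
    fix x
    show "x \<in> lurB j \<Longrightarrow> luroth x = - real j + (real j * real (j+1)) * x" by (rule T)
    assume "- real j + (real j * real (j+1)) * x \<in> {0..1}"
    hence a: "real j * real (j+1) * x \<le> real j + 1" "real j * real (j+1) * x \<ge> real j" by auto
    have "x \<le> 1 / real j" using a(1) jp ub_iff by blast
    moreover have "1 / real (j+1) \<le> x" using a(2) jp lb_iff by blast
    ultimately show "x \<in> {1/real (j+1)..1/real j}" by simp
  qed
  show "\<forall>x\<in>lurB j. x \<in> {0..1} \<longrightarrow> luroth x \<in> {0..1}"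
  proof (intro ballI impI)
    fix x assume x: "x \<in> lurB j"
    have "real j * real (j+1) * x \<le> real j + 1" using lb(2)[OF x] jp ub_iff by blast
    moreover have "real j * real (j+1) * x \<ge> real j" using lb(1)[OF x] jp lb_iff by blast
    ultimately show "luroth x \<in> {0..1}" using T[OF x] by (simp add: algebra_simps)
  qed
qed

lemma rec_reindex:
  assumes "n \<ge> 1"
  shows "(\<Sum>l=1..n. w (n-l)/(real l * real (l+1))) = (\<Sum>j<n. w j / (real (n-j) * real (n-j+1)))"
  by (rule sum.reindex_bij_witness[where i="\<lambda>l. n - l" and j="\<lambda>j. n - j"]) auto

lemma frac_aux: "(k::real) \<ge> 0 \<Longrightarrow> w / (k + 2) = w / (k + 1) - w / ((k + 1) * (k + 2))"
proof -
  assume k: "k \<ge> 0"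
  have a: "k + 1 \<noteq> 0" "k + 2 \<noteq> 0" using k by auto
  have "w / (k + 1) - w / (k + 2) = (w * (k+2) - w * (k+1)) / ((k+1)*(k+2))"
    by (rule diff_frac_eq[OF a])
  also have "w * (k+2) - w * (k+1) = w" by (simp add: algebra_simps)
  finally show ?thesis by simp
qed

lemma T_one:
  fixes w :: "nat \<Rightarrow> real"
  assumes w0: "w 0 = 1" and rec: "\<And>n. n \<ge> 1 \<Longrightarrow> w n = (\<Sum>l=1..n. w (n-l)/(real l * real (l+1)))"
  shows "(\<Sum>j<Suc n. w j / real (n - j + 1)) = 1"
proof (induction n)
  case 0 thus ?case using w0 by simp
next
  case (Suc n)
  have r: "w (Suc n) = (\<Sum>j<Suc n. w j / (real (Suc n - j) * real (Suc n - j + 1)))"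
    using rec[of "Suc n"] rec_reindex[of "Suc n" w] by simp
  have "(\<Sum>j<Suc (Suc n). w j / real (Suc n - j + 1))
      = (\<Sum>j<Suc n. w j / real (Suc n - j + 1)) + w (Suc n)" by simp
  also have "(\<Sum>j<Suc n. w j / real (Suc n - j + 1))
      = (\<Sum>j<Suc n. w j / real (n - j + 1)) - (\<Sum>j<Suc n. w j / (real (Suc n - j) * real (Suc n - j + 1)))"
    unfolding sum_subtractf[symmetric]
  proof (intro sum.cong refl)
    fix j assume "j \<in> {..<Suc n}"
    hence j: "j \<le> n" by simp
    have e: "real (Suc n - j + 1) = real (n - j) + 2" "real (Suc n - j) = real (n - j) + 1" "real (n - j + 1) = real (n-j) + 1"
      using j by (simp_all add: Suc_diff_le)
    have k: "real (n - j) \<ge> 0" by simp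
    show "w j / real (Suc n - j + 1) = w j / real (n - j + 1) - w j / (real (Suc n - j) * real (Suc n - j + 1))"
      unfolding e using frac_aux[OF k] by simp
  qed
  finally show ?case using Suc.IH r by simp
qed

lemma coef_nonneg:
  fixes k M :: real assumes "0 \<le> k" "k \<le> M"
  shows "1/(k+2) \<le> (M+1)/((M+2)*(k+1))"
proof -
  have p: "k + 2 > 0" "(M+2)*(k+1) > 0" using assms by auto
  have "(M+2)*(k+1) \<le> (M+1)*(k+2)" using assms by (simp add: algebra_simps)
  thus ?thesis using p by (simp add: divide_simps)
qed

lemma E_eq:
  fixes w :: "nat \<Rightarrow> real"
  assumes w0: "w 0 = 1" and rec: "\<And>n. n \<ge> 1 \<Longrightarrow> w n = (\<Sum>l=1..n. w (n-l)/(real l * real (l+1)))"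
    and n: "n \<ge> 1"
  shows "(\<Sum>j<Suc n. (if j = 0 then w 0 else w j - w (j-1)) / real (n - j + 1)) = 0"
proof -
  obtain m where m: "n = Suc m" using n by (cases n) auto
  have "(\<Sum>j<Suc n. (if j = 0 then w 0 else w j - w (j-1)) / real (n - j + 1))
     = (\<Sum>j<Suc n. w j / real (n - j + 1)) - (\<Sum>j<Suc n. (if j = 0 then 0 else w (j-1)) / real (n - j + 1))"
    unfolding sum_subtractf[symmetric] by (intro sum.cong) (auto simp: diff_divide_distrib)
  also have "(\<Sum>j<Suc n. (if j = 0 then 0 else w (j-1)) / real (n - j + 1)) = (\<Sum>i<Suc m. w i / real (m - i + 1))"
    unfolding m sum.lessThan_Suc_shift by simp
  also have "\<dots> = 1" using T_one[of w m, OF w0 rec] by simp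
  also have "(\<Sum>j<Suc n. w j / real (n - j + 1)) = 1" using T_one[of w n, OF w0 rec] by simp
  finally show ?thesis by simp
qed

lemma kaluza:
  fixes w :: "nat \<Rightarrow> real"
  assumes w0: "w 0 = 1" and rec: "\<And>n. n \<ge> 1 \<Longrightarrow> w n = (\<Sum>l=1..n. w (n-l)/(real l * real (l+1)))"
  shows "n \<ge> 1 \<Longrightarrow> w n \<le> w (n - 1)"
proof (induction n rule: less_induct)
  case (less n)
  define c where "c j = (if j = 0 then w 0 else w j - w (j-1))" for j
  have E: "(\<Sum>j<Suc k. c j / real (k - j + 1)) = 0" if "k \<ge> 1" for k
    unfolding c_def using E_eq[OF w0 rec that] .
  obtain m where m: "n = Suc m" using less.prems by (cases n) auto
  show ?case
  proof (cases "m = 0")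
    case True
    have "c 0 / 2 + c 1 = 0" using E[of 1] by (simp add: numeral_2_eq_2)
    thus ?thesis using True m w0 by (simp add: c_def)
  next
    case False
    define coef where "coef j = (real m+1)/((real m+2)*(real(m-j)+1)) - 1/(real(m-j)+2)" for j
    have E1: "(\<Sum>j<Suc m. c j / (real (m - j) + 1)) = 0"
      using E[of m] False by (simp add: add.commute)
    have E2: "(\<Sum>j<Suc m. c j / (real (m - j) + 2)) + c (Suc m) = 0"
    proof -
      have "(\<Sum>j<Suc (Suc m). c j / real (Suc m - j + 1)) = 0" using E[of "Suc m"] by simp
      moreover have "(\<Sum>j<Suc m. c j / real (Suc m - j + 1)) = (\<Sum>j<Suc m. c j / (real (m - j) + 2))"
        by (intro sum.cong) (auto simp: Suc_diff_le)
      ultimately show ?thesis by simp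
    qed
    have "(\<Sum>j<Suc m. c j * coef j)
        = (real m+1)/(real m+2) * (\<Sum>j<Suc m. c j / (real (m - j) + 1)) - (\<Sum>j<Suc m. c j / (real (m - j) + 2))"
      unfolding sum_distrib_left sum_subtractf[symmetric] coef_def
      by (intro sum.cong) (auto simp: field_simps)
    hence cS: "c (Suc m) = (\<Sum>j<Suc m. c j * coef j)" using E1 E2 by simp
    have "(\<Sum>j<Suc m. c j * coef j) \<le> 0"
    proof (intro sum_nonpos)
      fix j assume j: "j \<in> {..<Suc m}"
      show "c j * coef j \<le> 0"
      proof (cases "j = 0")
        case True
        have nz: "real m + 1 \<noteq> 0" by (simp add: add.commute)
        have "coef 0 = 0" unfolding coef_def using nonzero_divide_mult_cancel_right[OF nz, of "real m + 2"] by simp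
        thus ?thesis using True by simp
      next
        case False
        have "j < n" using j m by auto
        hence "w j \<le> w (j - 1)" using less.IH False by auto
        hence "c j \<le> 0" using False by (simp add: c_def)
        moreover have "coef j \<ge> 0" unfolding coef_def
          using coef_nonneg[of "real (m-j)" "real m"] j by auto
        ultimately show ?thesis by (simp add: mult_nonpos_nonneg)
      qed
    qed
    thus ?thesis using cS m by (simp add: c_def)
  qed
qed

lemma harm_rev: "(\<Sum>j<Suc n. 1 / real (n - j + 1)) = (harm (Suc n) :: real)"
proof -
  have "(\<Sum>j<Suc n. 1 / real (n - j + 1)) = (\<Sum>j<Suc n. (\<lambda>i. 1 / real (i + 1)) (Suc n - Suc j))"
    by (intro sum.cong) auto
  also have "\<dots> = (\<Sum>i<Suc n. 1 / real (i + 1))" by (rule sum.nat_diff_reindex)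
  also have "\<dots> = harm (Suc n)" unfolding harm_altdef by (simp add: divide_inverse)
  finally show ?thesis .
qed

locale rseq =
  fixes w :: "nat \<Rightarrow> real"
  assumes w0: "w 0 = 1" and rec: "\<And>n. n \<ge> 1 \<Longrightarrow> w n = (\<Sum>l=1..n. w (n-l)/(real l * real (l+1)))"
    and wnn: "\<And>n. w n \<ge> 0"
begin

lemma T1: "(\<Sum>j<Suc n. w j / real (n - j + 1)) = 1"
  by (rule T_one[OF w0 rec])

lemma dec: "i \<le> j \<Longrightarrow> w j \<le> w i"
proof (induction j)
  case 0 thus ?case by simp
next
  case (Suc j)
  have "w (Suc j) \<le> w j" using kaluza[OF w0 rec, of "Suc j"] by simp
  thus ?case using Suc by (cases "i = Suc j") auto
qed

lemma le1: "w n \<le> 1" using dec[of 0 n] w0 by simp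

lemma upper: "w n * harm (Suc n) \<le> 1"
proof -
  have "w n * harm (Suc n) = (\<Sum>j<Suc n. w n / real (n - j + 1))"
    unfolding harm_rev[symmetric] sum_distrib_left by simp
  also have "\<dots> \<le> (\<Sum>j<Suc n. w j / real (n - j + 1))"
    by (intro sum_mono divide_right_mono dec) auto
  finally show ?thesis using T1 by simp
qed

lemma lower: "1 \<le> real k / real (m + 1) + w k * harm (Suc m)"
proof -
  have split: "{..<Suc (k+m)} = {..<k} \<union> {k..k+m}" by auto
  have "1 = (\<Sum>j<Suc (k+m). w j / real (k + m - j + 1))" using T1[of "k+m"] by (rule sym)
  also have "\<dots> = (\<Sum>j<k. w j / real (k + m - j + 1)) + (\<Sum>j\<in>{k..k+m}. w j / real (k + m - j + 1))"
    unfolding split by (rule sum.union_disjoint) auto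
  also have "(\<Sum>j<k. w j / real (k + m - j + 1)) \<le> (\<Sum>j<k. 1 / real (m + 1))"
  proof (intro sum_mono)
    fix j assume "j \<in> {..<k}"
    hence "real (m + 1) \<le> real (k + m - j + 1)" by auto
    thus "w j / real (k + m - j + 1) \<le> 1 / real (m + 1)"
      using le1[of j] wnn[of j] by (intro frac_le) auto
  qed
  also have "(\<Sum>j<k. 1 / real (m + 1)) = real k / real (m + 1)" by simp
  also have "(\<Sum>j\<in>{k..k+m}. w j / real (k + m - j + 1)) \<le> (\<Sum>j\<in>{k..k+m}. w k / real (k + m - j + 1))"
    by (intro sum_mono divide_right_mono dec) auto
  also have "\<dots> = (\<Sum>i\<in>{0..m}. w k / real (k + m - (i + k) + 1))"
    using sum.shift_bounds_cl_nat_ivl[of "\<lambda>j. w k / real (k + m - j + 1)" 0 k m] by (simp add: add.commute)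
  also have "\<dots> = w k * (\<Sum>i<Suc m. 1 / real (m - i + 1))"
    unfolding sum_distrib_left atLeast0AtMost lessThan_Suc_atMost by (intro sum.cong) auto
  also have "\<dots> = w k * harm (Suc m)" by (simp only: harm_rev)
  finally show ?thesis by simp
qed

end

lemma harm_le_ln: "n \<ge> 1 \<Longrightarrow> harm n \<le> ln (real n) + (1::real)"
proof -
  assume n: "n \<ge> 1"
  then obtain k where k: "n = Suc k" by (cases n) auto
  have "harm (Suc k) - ln (real (Suc k)) \<le> harm (Suc 0) - ln (real (Suc 0))"
    using decseq_harm_diff_ln unfolding decseq_def by (metis le0 of_nat_Suc)
  moreover have "harm (Suc 0) = (1::real)" by (simp add: harm_def)
  ultimately show ?thesis using k by simp
qed

lemma h_lim: "((\<lambda>x::real. (1 - 1/(ln x + 1)) * ln x / (ln x + ln (ln x + 2) + 1)) \<longlongrightarrow> 1) at_top"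
  by real_asymp

context rseq begin

lemma lower_k:
  assumes k: "k \<ge> 3"
  shows "(1 - 1/(ln (real k) + 1)) * ln (real k) / (ln (real k) + ln (ln (real k) + 2) + 1) \<le> w k * harm k"
proof -
  define L where "L = ln (real k)"
  have L1: "L \<ge> 1"
  proof -
    have "exp 1 \<le> real k" using exp_le k by simp
    thus ?thesis unfolding L_def using k by (subst ln_ge_iff) auto
  qed
  define s where "s = nat \<lceil>L\<rceil> + 1"
  have s_real: "real s = of_int \<lceil>L\<rceil> + 1" unfolding s_def using L1 by simp
  have sL: "real s \<ge> L + 1" "real s \<le> L + 2" unfolding s_real
    using le_of_int_ceiling[of L] of_int_ceiling_le_add_one[of L] by linarith+
  have s1: "s \<ge> 1" unfolding s_def by simp
  define M where "M = k * s"
  have M1: "M \<ge> 1" unfolding M_def using s1 k by simp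
  obtain m where m: "M = m + 1" using M1 by (cases M) auto
  have low: "1 \<le> real k / real M + w k * harm M" using lower[of k m] m by simp
  have kM: "real k / real M = 1 / real s" unfolding M_def using k by simp
  have hMpos: "harm M > (0::real)" using M1 by simp
  have hM: "harm M \<le> L + ln (L + 2) + 1"
  proof -
    have "harm M \<le> ln (real M) + 1" using harm_le_ln[OF M1] .
    also have "ln (real M) = L + ln (real s)" unfolding M_def L_def using k s1 by (simp add: ln_mult)
    also have "ln (real s) \<le> ln (L + 2)" using sL s1 by simp
    finally show ?thesis by simp
  qed
  have hk: "harm k \<ge> L"
  proof -
    have "L \<le> ln (real k + 1)" unfolding L_def using k by simp
    also have "\<dots> \<le> harm k" by (rule ln_le_harm)
    finally show ?thesis .
  qed
  have f1: "1 - 1/real s \<le> w k * harm M" using low kM by simp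
  have f2: "0 \<le> 1 - 1/(L+1)" "1 - 1/(L+1) \<le> 1 - 1/real s"
    using L1 sL by (auto simp: field_simps)
  have "(1 - 1/(L + 1)) * L / (L + ln (L + 2) + 1) \<le> (1 - 1/real s) * (harm k / harm M)"
  proof -
    have "L / (L + ln (L + 2) + 1) \<le> harm k / harm M"
      using hk hM hMpos L1 by (intro frac_le) auto
    hence "(1 - 1/(L + 1)) * (L / (L + ln (L + 2) + 1)) \<le> (1 - 1/real s) * (harm k / harm M)"
      using f2 L1 s1 by (intro mult_mono) auto
    thus ?thesis by simp
  qed
  also have "\<dots> \<le> w k * harm M * (harm k / harm M)"
    using f1 hk L1 hMpos by (intro mult_right_mono divide_nonneg_pos) auto
  also have "\<dots> = w k * harm k"
  proof -
    have hM0: "harm M \<noteq> (0::real)" using hMpos by linarith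
    show ?thesis using hM0 by (simp add: field_simps)
  qed
  finally show ?thesis unfolding L_def .
qed

lemma wH_lim: "(\<lambda>n. w n * harm n) \<longlonglongrightarrow> 1"
proof (rule tendsto_sandwich)
  let ?h = "\<lambda>x::real. (1 - 1/(ln x + 1)) * ln x / (ln x + ln (ln x + 2) + 1)"
  show "\<forall>\<^sub>F n in sequentially. ?h (real n) \<le> w n * harm n"
    using eventually_ge_at_top[of 3] by eventually_elim (rule lower_k)
  show "\<forall>\<^sub>F n in sequentially. w n * harm n \<le> 1"
  proof (intro always_eventually allI)
    fix n
    have "w n * harm n \<le> w n * harm (Suc n)" using wnn by (intro mult_left_mono harm_mono) auto
    thus "w n * harm n \<le> 1" using upper[of n] by simp
  qed
  show "(\<lambda>n. ?h (real n)) \<longlonglongrightarrow> 1"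
    using filterlim_compose[OF h_lim filterlim_real_sequentially] by simp
qed simp

end

lemma stolz:
  fixes a b :: "nat \<Rightarrow> real"
  assumes inc: "\<And>n. b n \<le> b (Suc n)" and lim: "filterlim b at_top sequentially"
    and rat: "(\<lambda>n. (a (Suc n) - a n) / (b (Suc n) - b n)) \<longlonglongrightarrow> 1"
  shows "(\<lambda>n. a n / b n) \<longlonglongrightarrow> 1"
  unfolding LIMSEQ_iff
proof (intro allI impI)
  fix r :: real assume r: "r > 0"
  define e where "e = min (r/2) (1/2)"
  have e: "e > 0" "e < 1" "2 * e \<le> r" using r by (auto simp: e_def)
  obtain N1 where N1: "\<And>n. n \<ge> N1 \<Longrightarrow> norm ((a (Suc n) - a n) / (b (Suc n) - b n) - 1) < e"
    using rat e(1) unfolding LIMSEQ_iff by blast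
  obtain N2 where N2: "\<And>n. n \<ge> N2 \<Longrightarrow> b n \<ge> 1"
    using lim unfolding filterlim_at_top eventually_sequentially by blast
  define N where "N = max N1 N2"
  have stp: "\<bar>(a (Suc n) - a n) - (b (Suc n) - b n)\<bar> \<le> e * (b (Suc n) - b n)" if n: "n \<ge> N" for n
  proof -
    have q: "\<bar>(a (Suc n) - a n) / (b (Suc n) - b n) - 1\<bar> < e" using N1[of n] n by (simp add: N_def)
    have "b (Suc n) - b n \<noteq> 0"
    proof
      assume "b (Suc n) - b n = 0"
      thus False using q e by simp
    qed
    hence d: "b (Suc n) - b n > 0" using inc[of n] by linarith
    have "\<bar>(a (Suc n) - a n) / (b (Suc n) - b n) - 1\<bar> = \<bar>(a (Suc n) - a n) - (b (Suc n) - b n)\<bar> / (b (Suc n) - b n)"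
      using d by (simp add: field_simps abs_div)
    thus ?thesis using q d by (simp add: divide_less_eq)
  qed
  have acc: "\<bar>(a n - a N) - (b n - b N)\<bar> \<le> e * (b n - b N)" if "n \<ge> N" for n
    using that
  proof (induction n rule: dec_induct)
    case base thus ?case by simp
  next
    case (step n)
    have "\<bar>(a (Suc n) - a N) - (b (Suc n) - b N)\<bar>
        \<le> \<bar>(a n - a N) - (b n - b N)\<bar> + \<bar>(a (Suc n) - a n) - (b (Suc n) - b n)\<bar>" by linarith
    also have "\<dots> \<le> e * (b n - b N) + e * (b (Suc n) - b n)" using step.IH step(1) \<open>N \<le> n\<close> stp[of n] by simp
    finally show ?case by (simp add: algebra_simps)
  qed
  have bN: "b N \<ge> 1" using N2[of N] by (simp add: N_def)
  define C where "C = \<bar>a N - b N\<bar>"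
  obtain N3 where N3: "\<And>n. n \<ge> N3 \<Longrightarrow> b n \<ge> C / e + 1"
    using lim unfolding filterlim_at_top eventually_sequentially by blast
  show "\<exists>no. \<forall>n\<ge>no. norm (a n / b n - 1) < r"
  proof (intro exI allI impI)
    fix n assume n: "n \<ge> max N N3"
    have bn: "b n \<ge> C / e + 1" using N3 n by simp
    have C0: "C \<ge> 0" by (simp add: C_def)
    hence bpos: "b n > 0" using bn e by (smt (verit) divide_nonneg_pos)
    have h1: "\<bar>a n - a N - (b n - b N)\<bar> \<le> e * (b n - b N)" using acc[of n] n by simp
    have h2: "e * (b n - b N) \<le> e * b n" using e bN by (simp add: algebra_simps)
    have "\<bar>a n - b n\<bar> \<le> \<bar>a n - a N - (b n - b N)\<bar> + \<bar>a N - b N\<bar>" by linarith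
    hence A: "\<bar>a n - b n\<bar> \<le> e * b n + C" using h1 h2 unfolding C_def by linarith
    have "C < e * b n"
    proof -
      have "C / e < b n" using bn by simp
      thus ?thesis using e(1) by (simp add: divide_less_eq mult.commute)
    qed
    hence "\<bar>a n - b n\<bar> < 2 * e * b n" using A by simp
    hence "\<bar>a n - b n\<bar> / b n < 2 * e" using bpos by (simp add: divide_less_eq)
    moreover have "\<bar>a n / b n - 1\<bar> = \<bar>a n - b n\<bar> / b n" using bpos by (simp add: field_simps abs_div)
    ultimately show "norm (a n / b n - 1) < r" using e by simp
  qed
qed

lemma harm_ln_ratio: "(\<lambda>n. ln (real n) / harm n :: real) \<longlonglongrightarrow> 1"
proof -
  have lnlim: "filterlim (\<lambda>n. ln (real n)) at_top sequentially"
    using filterlim_compose[OF ln_at_top filterlim_real_sequentially] .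
  have "(\<lambda>n. (harm n - ln (real n)) / ln (real n) :: real) \<longlonglongrightarrow> 0"
    by (rule tendsto_divide_0[OF euler_mascheroni_LIMSEQ filterlim_at_top_imp_at_infinity[OF lnlim]])
  hence "(\<lambda>n. 1 + (harm n - ln (real n)) / ln (real n) :: real) \<longlonglongrightarrow> 1 + 0"
    by (intro tendsto_add tendsto_const)
  hence lim0: "(\<lambda>n. 1 + (harm n - ln (real n)) / ln (real n) :: real) \<longlonglongrightarrow> 1" by simp
  have ev:  "\<forall>\<^sub>F n in sequentially. 1 + (harm n - ln (real n)) / ln (real n) = harm n / ln (real n)"
      using eventually_ge_at_top[of 2]
    proof eventually_elim
      case (elim n)
      have "ln (real n) > 0" using elim by simp
      thus ?case by (simp add: field_simps)
    qed
  have a: "(\<lambda>n. harm n / ln (real n) :: real) \<longlonglongrightarrow> 1"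
    by (rule Lim_transform_eventually[OF lim0 ev])
  have "(\<lambda>n. inverse (harm n / ln (real n)) :: real) \<longlonglongrightarrow> inverse 1"
    by (intro tendsto_inverse a) simp
  thus ?thesis by (simp add: inverse_divide)
qed

lemma harm_ge1: "n \<ge> 1 \<Longrightarrow> harm n \<ge> (1::real)"
proof -
  assume "n \<ge> 1"
  hence "harm 1 \<le> (harm n :: real)" by (rule harm_mono)
  thus ?thesis by (simp add: harm_def)
qed

lemma b_inc: "real n / harm n \<le> real (Suc n) / (harm (Suc n) :: real)"
proof (cases "n = 0")
  case True thus ?thesis by (simp add: harm_def)
next
  case False
  hence n1: "n \<ge> 1" by simp
  have H0: "harm n \<ge> (1::real)" using harm_ge1[OF n1] .
  have H1: "harm (Suc n) = harm n + 1 / real (Suc n)" by (simp add: harm_Suc divide_inverse)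
  have q: "real n / real (Suc n) \<le> 1" by simp
  have "real n * harm (Suc n) = real n * harm n + real n / real (Suc n)" unfolding H1 by (simp add: algebra_simps)
  also have "\<dots> \<le> real n * harm n + harm n" using q H0 by linarith
  also have "\<dots> = real (Suc n) * harm n" by (simp add: algebra_simps)
  finally have "real n * harm (Suc n) \<le> real (Suc n) * harm n" .
  moreover have "1 / real (Suc n) > 0" by simp
  moreover have "harm (Suc n) > (0::real)" "harm n > (0::real)" using H0 H1 calculation(2) by linarith+
  ultimately show ?thesis using n1 by (simp add: divide_simps mult.commute)
qed

lemma b_lim: "filterlim (\<lambda>n. real n / harm n :: real) at_top sequentially"
proof (rule filterlim_at_top_mono)
  show "filterlim (\<lambda>n. real n / (ln (real n) + 1)) at_top sequentially"
  proof -
    have "filterlim (\<lambda>x::real. x / (ln x + 1)) at_top at_top" by real_asymp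
    thus ?thesis using filterlim_compose[OF _ filterlim_real_sequentially] by blast
  qed
  show "\<forall>\<^sub>F n in sequentially. real n / (ln (real n) + 1) \<le> real n / harm n"
    using eventually_ge_at_top[of 1]
  proof eventually_elim
    case (elim n)
    have "harm n \<le> ln (real n) + (1::real)" by (rule harm_le_ln[OF elim])
    moreover have "harm n > (0::real)" using elim by simp
    moreover have "ln (real n) + 1 > 0" using elim by (smt (verit) ln_ge_zero of_nat_1 of_nat_mono)
    ultimately show ?case by (intro divide_left_mono mult_pos_pos) auto
  qed
qed

context rseq begin

lemma sum_lim: "(\<lambda>n. (\<Sum>k=1..n. w k) / (real n / harm n)) \<longlonglongrightarrow> 1"
proof (rule stolz[OF b_inc b_lim])
  let ?a = "\<lambda>n. \<Sum>k=1..n. w k"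
  let ?q = "\<lambda>n. real n / real (Suc n)"
  have lim1: "(\<lambda>n. w (Suc n) * harm (Suc n)) \<longlonglongrightarrow> 1"
    using LIMSEQ_Suc[OF wH_lim] .
  have lim2: "(\<lambda>n. ?q n * inverse (harm n)) \<longlonglongrightarrow> 1 * 0"
    by (intro tendsto_mult LIMSEQ_n_over_Suc_n tendsto_inverse_0_at_top harm_at_top)
  have lim3: "(\<lambda>n. w (Suc n) * harm (Suc n) * (1 / (1 - ?q n * inverse (harm n)))) \<longlonglongrightarrow> 1 * (1 / (1 - 1 * 0))"
    by (intro tendsto_mult tendsto_divide tendsto_diff tendsto_const lim1 lim2) simp
  have lim4: "(\<lambda>n. w (Suc n) * harm (Suc n) * (1 / (1 - ?q n * inverse (harm n)))) \<longlonglongrightarrow> 1"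
    using lim3 by simp
  have ev: "\<forall>\<^sub>F n in sequentially. w (Suc n) * harm (Suc n) * (1 / (1 - ?q n * inverse (harm n)))
        = (?a (Suc n) - ?a n) / (real (Suc n) / harm (Suc n) - real n / harm n)"
      using eventually_ge_at_top[of 1]
    proof eventually_elim
      case (elim n)
      define H0 :: real where "H0 = harm n"
      define H1 :: real where "H1 = harm (Suc n)"
      have h0: "H0 \<ge> 1" unfolding H0_def by (rule harm_ge1[OF elim])
      have h1: "H1 = H0 + 1 / real (Suc n)" unfolding H0_def H1_def by (simp add: harm_Suc divide_inverse)
      have qle: "?q n < 1" by simp
      have qnn: "?q n \<ge> 0" by simp
      have "1 / real (Suc n) > 0" by simp
      hence H1pos: "H1 > 0" using h0 h1 by linarith
      have d: "real (Suc n) / H1 - real n / H0 = (H0 - ?q n) / (H0 * H1)"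
      proof -
        have "real (Suc n) / H1 - real n / H0 = (real (Suc n) * H0 - real n * H1) / (H0 * H1)"
          using h0 H1pos by (simp add: diff_frac_eq mult.commute)
        also have "real (Suc n) * H0 - real n * H1 = H0 - ?q n" unfolding h1
          by (simp add: algebra_simps)
        finally show ?thesis .
      qed
      have pos: "H0 - ?q n > 0" using h0 qle by linarith
      have aS: "?a (Suc n) - ?a n = w (Suc n)" by simp
      have "H0 \<noteq> 0" using h0 by simp
      hence "(H0 - ?q n) / H0 = 1 - ?q n * inverse H0" by (simp add: divide_inverse left_diff_distrib)
      hence "1 - ?q n * inverse H0 = (H0 - ?q n) / H0" by simp
      hence "w (Suc n) * H1 * (1 / (1 - ?q n * inverse H0)) = w (Suc n) * H1 * H0 / (H0 - ?q n)"
        by simp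
      also have "\<dots> = w (Suc n) / ((H0 - ?q n) / (H0 * H1))"
        using pos h0 H1pos by (simp add: field_simps)
      finally have F: "w (Suc n) * H1 * (1 / (1 - ?q n * inverse H0)) = w (Suc n) / ((H0 - ?q n) / (H0 * H1))" .
      show ?case unfolding aS d[unfolded H0_def H1_def] using F[unfolded H0_def H1_def] .
    qed
  show "(\<lambda>n. (?a (Suc n) - ?a n) / (real (Suc n) / harm (Suc n) - real n / harm n)) \<longlonglongrightarrow> 1"
    by (rule Lim_transform_eventually[OF lim4 ev])
qed

end

lemma sum_level_0: "sum_level T D 0 = {}"
proof -
  have "\<not> (ls \<noteq> [] \<and> (\<forall>l\<in>set ls. l \<ge> 1) \<and> sum_list ls = 0)" for ls :: "nat list"
    by (cases ls) auto
  thus ?thesis unfolding sum_level_def by blast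
qed

lemma lev_0_measure: "measure lborel (lev T D 0) = 1" by (simp add: lev_def)

lemma rseq_good: "good T D \<Longrightarrow> rseq (\<lambda>n. measure lborel (lev T D n))"
  by (unfold_locales) (auto simp: lev_0_measure lev_rec)

lemma lev_eq:
  "measure lborel (lev luroth lurB n) = measure lborel (lev alt_luroth harmA n)"
proof (induction n rule: less_induct)
  case (less n)
  show ?case
  proof (cases "n = 0")
    case True thus ?thesis by (simp add: lev_def)
  next
    case False
    hence n1: "n \<ge> 1" by simp
    have "measure lborel (lev luroth lurB n) = (\<Sum>l=1..n. measure lborel (lev luroth lurB (n - l)) / (real l * real (l+1)))"
      by (rule lev_rec[OF good_lur n1])
    also have "\<dots> = (\<Sum>l=1..n. measure lborel (lev alt_luroth harmA (n - l)) / (real l * real (l+1)))"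
      using less n1 by (intro sum.cong) auto
    also have "\<dots> = measure lborel (lev alt_luroth harmA n)"
      by (rule lev_rec[OF good_alt n1, symmetric])
    finally show ?thesis .
  qed
qed

lemma level_eq: "measure lborel (lur_level n) = measure lborel (alt_level n)"
proof (cases "n = 0")
  case True thus ?thesis by (simp add: sum_level_0)
next
  case False thus ?thesis using lev_eq[of n] by (simp add: lev_def)
qed

lemma harm_eq: "(\<Sum>k=1..n. 1 / real k) = (harm n :: real)"
  by (simp add: harm_def divide_inverse)

theorem corollary5p2:
  shows "((\<forall>n. (\<Sum>k=1..n. measure lborel (lur_level k)) = (\<Sum>k=1..n. measure lborel (alt_level k)))
          \<and> (\<lambda>n. \<Sum>k=1..n. measure lborel (lur_level k))
              \<sim>[at_top] (\<lambda>n. real n / (\<Sum>k=1..n. 1 / real k))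
          \<and> (\<lambda>n. real n / (\<Sum>k=1..n. 1 / real k)) \<sim>[at_top] (\<lambda>n. real n / ln (real n)))
       \<and> ((\<forall>n. measure lborel (lur_level n) = measure lborel (alt_level n))
          \<and> (\<lambda>n. measure lborel (lur_level n)) \<sim>[at_top] (\<lambda>n. 1 / (\<Sum>k=1..n. 1 / real k))
          \<and> (\<lambda>n. 1 / (\<Sum>k=1..n. 1 / real k)) \<sim>[at_top] (\<lambda>n. 1 / ln (real n)))"
proof -
  define w where "w n = measure lborel (lev luroth lurB n)" for n
  interpret R: rseq w unfolding w_def by (rule rseq_good[OF good_lur])
  have wl: "measure lborel (lur_level n) = w n" if "n \<ge> 1" for n
    using that by (simp add: w_def lev_def)
  have P4: "\<forall>n. measure lborel (lur_level n) = measure lborel (alt_level n)" using level_eq by blast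
  have P1: "\<forall>n. (\<Sum>k=1..n. measure lborel (lur_level k)) = (\<Sum>k=1..n. measure lborel (alt_level k))"
    using level_eq by simp
  have sumw: "(\<Sum>k=1..n. measure lborel (lur_level k)) = (\<Sum>k=1..n. w k)" for n
    using wl by (intro sum.cong) auto
  have P2: "(\<lambda>n. \<Sum>k=1..n. measure lborel (lur_level k)) \<sim>[at_top] (\<lambda>n. real n / (\<Sum>k=1..n. 1 / real k))"
    unfolding sumw harm_eq by (rule asymp_equivI'[OF R.sum_lim])
  have P3: "(\<lambda>n. real n / (\<Sum>k=1..n. 1 / real k)) \<sim>[at_top] (\<lambda>n. real n / ln (real n))"
    unfolding harm_eq
  proof (rule asymp_equivI')
    have "\<forall>\<^sub>F n in sequentially. ln (real n) / harm n = (real n / harm n) / (real n / ln (real n))"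
      using eventually_ge_at_top[of 1] by eventually_elim simp
    thus "(\<lambda>n. (real n / harm n) / (real n / ln (real n))) \<longlonglongrightarrow> 1"
      by (rule Lim_transform_eventually[OF harm_ln_ratio])
  qed
  have P5: "(\<lambda>n. measure lborel (lur_level n)) \<sim>[at_top] (\<lambda>n. 1 / (\<Sum>k=1..n. 1 / real k))"
    unfolding harm_eq
  proof (rule asymp_equivI')
    have "\<forall>\<^sub>F n in sequentially. w n * harm n = measure lborel (lur_level n) / (1 / harm n)"
      using eventually_ge_at_top[of 1] by eventually_elim (simp add: wl)
    thus "(\<lambda>n. measure lborel (lur_level n) / (1 / harm n)) \<longlonglongrightarrow> 1"
      by (rule Lim_transform_eventually[OF R.wH_lim])
  qed
  have P6: "(\<lambda>n. 1 / (\<Sum>k=1..n. 1 / real k)) \<sim>[at_top] (\<lambda>n. 1 / ln (real n))"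
    unfolding harm_eq
  proof (rule asymp_equivI')
    have "\<forall>\<^sub>F n in sequentially. ln (real n) / harm n = (1 / harm n) / (1 / ln (real n))"
      using eventually_ge_at_top[of 1] by eventually_elim simp
    thus "(\<lambda>n. (1 / harm n) / (1 / ln (real n))) \<longlonglongrightarrow> 1"
      by (rule Lim_transform_eventually[OF harm_ln_ratio])
  qed
  show ?thesis using P1 P2 P3 P4 P5 P6 by blast
qed

end
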